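(* Let $n\ge 2$, let $g_1(s),\dots,g_n(s)$ and $f(s)$ be rational proper transfer functions, and let $L$ be a real symmetric $n\times n$ graph Laplacian with eigenvalues $0=\lambda_1(L)\le\lambda_2(L)\le\cdots\le\lambda_n(L)$. Define $$T(s)=\big(I_n+\mathrm{diag}\{g_i(s)\}f(s)L\big)^{-1}\mathrm{diag}\{g_i(s)\}=\big(\mathrm{diag}\{g_i^{-1}(s)\}+f(s)L\big)^{-1},\qquad \bar g(s)=\Big(\frac1n\sum_{i=1}^n g_i^{-1}(s)\Big)^{-1}.$$ Let $s_0\in\mathbb{C}$ be a point that is not a pole of $f(s)$, and suppose there are constants $M_1,M_2>0$ with $|\bar g(s_0)|\le M_1$ and $\max_{1\le i\le n}|g_i^{-1}(s_0)|\le M_2$. Then, whenever $|f(s_0)|\lambda_2(L)> M_2+M_1M_2^2$, $$\Big\|T(s_0)-\frac1n\bar g(s_0)\mathbf{1}\mathbf{1}^\top\Big\|\le \frac{(M_1M_2+1)^2}{|f(s_0)|\lambda_2(L)-M_2-M_1M_2^2}.$$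
   Context: $\mathbf{1}=[1,\dots,1]^\top\in\mathbb{R}^n$, $I_n$ is the $n\times n$ identity, $\|\cdot\|$ is the spectral norm, and $\mathrm{diag}\{x_i\}$ is the diagonal matrix with entries $x_i$. A (weighted, undirected) graph Laplacian $L$ is real symmetric positive semidefinite with $L\mathbf{1}=0$; $\lambda_i(L)$ denotes its $i$-th smallest eigenvalue. *)

theory Defs
  imports "HOL-Analysis.Analysis" "HOL-Computational_Algebra.Computational_Algebra"
    "HOL-Library.Multiset" "HOL-Computational_Algebra.Field_as_Ring" "HOL-Computational_Algebra.Normalized_Fraction"
begin

text \<open>A rational transfer function is an element of the field of fractions of
complex polynomials; we use its normalized (coprime) numerator/denominator
representation.\<close>

type_synonym tf = "complex poly fract"

definition tf_num :: "tf \<Rightarrow> complex poly" where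
  "tf_num r = fst (quot_of_fract r)"

definition tf_den :: "tf \<Rightarrow> complex poly" where
  "tf_den r = snd (quot_of_fract r)"

definition proper_tf :: "tf \<Rightarrow> bool" where
  "proper_tf r \<longleftrightarrow> degree (tf_num r) \<le> degree (tf_den r)"

definition is_pole :: "tf \<Rightarrow> complex \<Rightarrow> bool" where
  "is_pole r s \<longleftrightarrow> poly (tf_den r) s = 0"

definition tf_eval :: "tf \<Rightarrow> complex \<Rightarrow> complex" where
  "tf_eval r s = poly (tf_num r) s / poly (tf_den r) s"

definition graph_laplacian :: "real^'n^'n \<Rightarrow> bool" where
  "graph_laplacian L \<longleftrightarrow> transpose L = L \<and> (\<forall>x. 0 \<le> x \<bullet> (L *v x)) \<and> L *v (\<chi> i. 1) = 0"

definition charpoly :: "real^'n^'n \<Rightarrow> real poly" where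
  "charpoly L = det (\<chi> i j. (if i = j then [:0, 1:] else 0) - [:L $ i $ j:])"

text \<open>Eigenvalues (roots of the characteristic polynomial with multiplicity),
sorted increasingly; eig L k is the k-th smallest (1-based).\<close>
definition eig :: "real^'n^'n \<Rightarrow> nat \<Rightarrow> real" where
  "eig L k = sorted_list_of_multiset (proots (charpoly L)) ! (k - 1)"

end

theory Submission
  imports Defs
begin


definition ev_ok :: "tf \<Rightarrow> complex \<Rightarrow> complex \<Rightarrow> bool" where
  "ev_ok r s v \<longleftrightarrow> (\<exists>p q. r = Fract p q \<and> q \<noteq> 0 \<and> poly q s \<noteq> 0 \<and> v = poly p s / poly q s)"

lemma ev_ok_D:
  assumes "ev_ok r s v"
  shows "\<not> is_pole r s \<and> tf_eval r s = v"
proof -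
  obtain p q where r: "r = Fract p q" and q: "q \<noteq> 0" "poly q s \<noteq> 0" and v: "v = poly p s / poly q s"
    using assms unfolding ev_ok_def by blast
  define a where "a = tf_num r"
  define b where "b = tf_den r"
  have rab: "r = Fract a b" unfolding a_def b_def tf_num_def tf_den_def by simp
  have b0: "b \<noteq> 0" unfolding b_def tf_den_def by simp
  have cop: "coprime a b" unfolding a_def b_def tf_num_def tf_den_def by (rule coprime_quot_of_fract)
  have e: "a * q = p * b" using r rab b0 q by (simp add: eq_fract)
  have "b dvd a * q" using e by simp
  then have "b dvd q" using cop by (simp add: coprime_commute coprime_dvd_mult_right_iff)
  then obtain k where k: "q = b * k" by blast
  have pb: "poly b s \<noteq> 0" using q k by auto
  have "poly a s * poly q s = poly p s * poly b s" using arg_cong[OF e, of "\<lambda>x. poly x s"] by simp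
  then have "poly a s * poly q s = (v * poly b s) * poly q s" using q v by (simp add: field_simps)
  then have "poly a s / poly b s = v" using pb q by (simp add: field_simps)
  then show ?thesis using pb unfolding is_pole_def tf_eval_def b_def a_def by simp
qed

lemma ev_ok_I:
  assumes "\<not> is_pole r s" shows "ev_ok r s (tf_eval r s)"
  unfolding ev_ok_def
  apply (rule exI[of _ "tf_num r"], rule exI[of _ "tf_den r"])
  using assms by (simp add: tf_num_def tf_den_def is_pole_def tf_eval_def)

lemma ev_ok_add:
  assumes "ev_ok r s v" "ev_ok r' s v'" shows "ev_ok (r + r') s (v + v')"
proof -
  obtain p q where a: "r = Fract p q" "q \<noteq> 0" "poly q s \<noteq> 0" "v = poly p s / poly q s"
    using assms(1) unfolding ev_ok_def by blast
  obtain p' q' where b: "r' = Fract p' q'" "q' \<noteq> 0" "poly q' s \<noteq> 0" "v' = poly p' s / poly q' s"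
    using assms(2) unfolding ev_ok_def by blast
  show ?thesis unfolding ev_ok_def
    apply (rule exI[of _ "p * q' + p' * q"], rule exI[of _ "q * q'"])
    using a b by (simp add: add_frac_eq)
qed

lemma ev_ok_zero: "ev_ok 0 s 0"
  unfolding ev_ok_def by (rule exI[of _ 0], rule exI[of _ 1]) (simp add: Zero_fract_def)

lemma ev_ok_sum:
  assumes "finite I" "\<And>i. i \<in> I \<Longrightarrow> ev_ok (r i) s (v i)"
  shows "ev_ok (\<Sum>i\<in>I. r i) s (\<Sum>i\<in>I. v i)"
  using assms by (induction I rule: finite_induct) (auto simp: ev_ok_zero ev_ok_add)

lemma ev_ok_div_nat:
  assumes "ev_ok r s v" "m > 0" shows "ev_ok (r / of_nat m) s (v / of_nat m)"
proof -
  obtain p q where a: "r = Fract p q" "q \<noteq> 0" "poly q s \<noteq> 0" "v = poly p s / poly q s"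
    using assms(1) unfolding ev_ok_def by blast
  have "r / of_nat m = Fract p (smult (of_nat m) q)"
    using a assms(2) by (simp add: of_nat_fract of_nat_poly mult.commute)
  moreover have "v / of_nat m = poly p s / poly (smult (of_nat m) q) s"
    using a by simp
  moreover have "smult (of_nat m) q \<noteq> 0" "poly (smult (of_nat m) q) s \<noteq> 0"
    using a assms(2) by auto
  ultimately show ?thesis unfolding ev_ok_def by blast
qed

lemma of_nat_tf_nz: "m > 0 \<Longrightarrow> (of_nat m :: tf) \<noteq> 0"
  by (simp add: of_nat_fract Zero_fract_def eq_fract)

lemma gbar_rel:
  fixes h gb :: tf and S :: complex and m :: nat
  assumes "ev_ok h s S" "h \<noteq> 0" "m > 0" "gb = inverse (h / of_nat m)" "\<not> is_pole gb s"
  shows "tf_eval gb s * S = of_nat m"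
proof -
  have "ev_ok (h / of_nat m) s (S / of_nat m)" using assms ev_ok_div_nat by blast
  then obtain p q where a: "h / of_nat m = Fract p q" "q \<noteq> 0" "poly q s \<noteq> 0" "S / of_nat m = poly p s / poly q s"
    unfolding ev_ok_def by blast
  have p0: "p \<noteq> 0" using a(1) assms(2,3) of_nat_tf_nz[OF assms(3)] by (auto simp: fract_collapse)
  obtain a' b' where b: "gb = Fract a' b'" "b' \<noteq> 0" "poly b' s \<noteq> 0" "tf_eval gb s = poly a' s / poly b' s"
    using ev_ok_I[OF assms(5)] unfolding ev_ok_def by blast
  have "Fract q p = Fract a' b'" using assms(4) a(1) b(1) by simp
  then have e: "q * b' = a' * p" using p0 b(2) by (simp add: eq_fract)
  have e2: "poly q s * poly b' s = poly a' s * poly p s" using arg_cong[OF e, of "\<lambda>x. poly x s"] by simp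
  have Se: "S = of_nat m * poly p s / poly q s" using a(4) assms(3) by (simp add: field_simps)
  have nz: "poly b' s * poly q s \<noteq> 0" using b(3) a(3) by simp
  have "tf_eval gb s * S = (poly a' s * poly p s) * of_nat m / (poly b' s * poly q s)"
    unfolding b(4) Se by simp
  also have "\<dots> = (poly b' s * poly q s) * of_nat m / (poly b' s * poly q s)"
    using e2 by (simp add: mult.commute)
  also have "\<dots> = of_nat m" using nz by simp
  finally show ?thesis .
qed


no_notation fps_nth (infixl "$" 75)

lemma poly_det: "poly (det P) a = det (\<chi> i j. poly (P$i$j) a)"
  unfolding det_def by (simp add: poly_sum poly_prod)

lemma charpoly_eval: "poly (charpoly L) t = det (mat t - L)"
  unfolding charpoly_def poly_det
  by (rule arg_cong[where f=det]) (simp add: vec_eq_iff mat_def)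

lemma det_zero_if_kernel:
  fixes M :: "real^'n^'n"
  assumes "M *v x = 0" "x \<noteq> 0" shows "det M = 0"
proof -
  have "\<not> inj ((*v) M)" using assms
    by (metis inj_eq matrix_vector_mult_0_right)
  then show ?thesis using det_nz_iff_inj[OF matrix_vector_mul_linear[of M]]
    by (simp add: matrix_of_matrix_vector_mul)
qed

lemma det_nz_if_inj:
  fixes M :: "real^'n^'n"
  assumes "\<And>x. M *v x = 0 \<Longrightarrow> x = 0" shows "det M \<noteq> 0"
proof -
  have "inj ((*v) M)"
  proof (rule injI)
    fix x y assume "M *v x = M *v y"
    then have "M *v (x - y) = 0" by (simp add: matrix_vector_mult_diff_distrib)
    then have "x - y = 0" using assms by blast
    then show "x = y" by simp
  qed
  then show ?thesis using det_nz_iff_inj[OF matrix_vector_mul_linear[of M]]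
    by (simp add: matrix_of_matrix_vector_mul)
qed

lemma mat_vec_t: "mat t *v x = t *s x"
  by (simp add: vec_eq_iff matrix_vector_mult_def mat_def if_distrib[of "\<lambda>u. u * _"] cong: if_cong)

lemma eig_root:
  fixes L :: "real^'n^'n"
  assumes "L *v x = t *s x" "x \<noteq> 0" shows "poly (charpoly L) t = 0"
proof -
  have "(mat t - L) *v x = mat t *v x - L *v x" by (rule matrix_vector_mult_diff_rdistrib)
  also have "mat t *v x = t *s x" by (simp add: mat_vec_t)
  finally have "(mat t - L) *v x = 0" using assms by simp
  then show ?thesis unfolding charpoly_eval by (rule det_zero_if_kernel) (fact assms)
qed

lemma charpoly_nz:
  fixes L :: "real^'n^'n"
  assumes psd: "\<And>x. 0 \<le> x \<bullet> (L *v x)"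
  shows "charpoly L \<noteq> 0"
proof -
  have "det (mat (-1) - L) \<noteq> 0"
  proof (rule det_nz_if_inj)
    fix x :: "real^'n" assume "(mat (-1) - L) *v x = 0"
    then have "mat (-1) *v x - L *v x = 0" by (simp add: matrix_vector_mult_diff_rdistrib)
    then have "L *v x = - x" by (simp add: mat_vec_t)
    then have "0 \<le> - (x \<bullet> x)" using psd[of x] by simp
    then show "x = 0" by (metis inner_eq_zero_iff inner_ge_zero neg_0_le_iff_le order_antisym)
  qed
  then have "poly (charpoly L) (-1) \<noteq> 0" by (simp add: charpoly_eval)
  then show ?thesis by auto
qed

lemma sorted_second_le_a:
  fixes s :: "real list"
  assumes "sorted s" "a \<in> set s" "b \<in> set s" "a < b" shows "s ! 1 \<le> b"
proof -
  obtain j where j: "j < length s" "s ! j = b" using assms(3) by (metis in_set_conv_nth)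
  obtain k where k: "k < length s" "s ! k = a" using assms(2) by (metis in_set_conv_nth)
  have "j \<noteq> 0"
  proof
    assume "j = 0"
    then have "s ! j \<le> s ! k" using sorted_nth_mono[OF assms(1), of 0 k] k by simp
    then show False using j k assms(4) by simp
  qed
  then show ?thesis using sorted_nth_mono[OF assms(1), of 1 j] j by simp
qed

lemma sorted_second_le_b:
  fixes s :: "real list"
  assumes "sorted s" "count (mset s) a \<ge> 2" shows "s ! 1 \<le> a"
proof (cases s)
  case Nil then show ?thesis using assms by simp
next
  case (Cons x r)
  show ?thesis
  proof (cases r)
    case Nil then show ?thesis using assms Cons by (auto split: if_splits)
  next
    case (Cons y r')
    show ?thesis
    proof (rule ccontr)
      assume "\<not> s ! 1 \<le> a"
      then have ya: "a < y" using Cons \<open>s = x # r\<close> by simp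
      have "\<forall>z\<in>set r'. y \<le> z" using assms(1) Cons \<open>s = x # r\<close> by simp
      then have "a \<notin> set r'" using ya by force
      then have "count (mset r') a = 0" by (simp add: count_eq_zero_iff)
      then have "count (mset s) a \<le> 1" using Cons \<open>s = x # r\<close> ya
        by (simp del: count_mset_0_iff)
      then show False using assms(2) by simp
    qed
  qed
qed

lemma rows_comb: fixes A :: "'a::comm_ring_1^'n^'n" shows "(\<Sum>l\<in>UNIV. v$l *s row l A) = transpose A *v v"
  apply (simp add: vec_eq_iff sum_component row_def transpose_def matrix_vector_mult_def)
  apply (intro allI sum.cong)
   apply (auto simp: mult.commute)
  done

lemma double_zero_root:
  fixes L :: "real^'n^'n" and x :: "real^'n"
  assumes sym: "transpose L = L" and L1: "L *v (\<chi> k. 1) = 0" and Lx: "L *v x = 0"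
    and xij: "x $ i \<noteq> x $ j" and nz: "charpoly L \<noteq> 0"
  shows "count (proots (charpoly L)) 0 \<ge> 2"
proof -
  have ij: "i \<noteq> j" using xij by auto
  define v :: "real^'n" where "v = (\<chi> k. (x$k - x$j) / (x$i - x$j))"
  define w :: "real^'n" where "w = (\<chi> k. (x$k - x$i) / (x$j - x$i))"
  have v_eq: "v = (1 / (x$i - x$j)) *s (x - x$j *s (\<chi> k. 1))"
    unfolding v_def by (simp add: vec_eq_iff diff_divide_distrib)
  have w_eq: "w = (1 / (x$j - x$i)) *s (x - x$i *s (\<chi> k. 1))"
    unfolding w_def by (simp add: vec_eq_iff diff_divide_distrib)
  have Lv: "L *v v = 0" unfolding v_eq
    by (simp add: matrix_vector_mult_diff_distrib Lx L1 vector_scalar_commute)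
  have Lw: "L *v w = 0" unfolding w_eq
    by (simp add: matrix_vector_mult_diff_distrib Lx L1 vector_scalar_commute)
  have vi: "v$i = 1" "v$j = 0" using xij unfolding v_def by auto
  have wi: "w$i = 0" "w$j = 1" using xij unfolding w_def by auto
  define NP :: "real poly^'n^'n" where "NP = (\<chi> k l. if k = j then [:w$l:] else if k = i then [:v$l:]
      else (if k = l then [:0, 1:] else 0) - [:L $ k $ l:])"
  have key: "poly (charpoly L) t = poly ([:0,1:]^2 * det NP) t" for t
  proof -
    define A :: "real^'n^'n" where "A = mat t - L"
    have At: "transpose A = A" unfolding A_def using sym
      by (simp add: vec_eq_iff transpose_def mat_def)
    have Av: "A *v v = t *s v" unfolding A_def
      by (simp add: matrix_vector_mult_diff_rdistrib mat_vec_t Lv)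
    have Aw: "A *v w = t *s w" unfolding A_def
      by (simp add: matrix_vector_mult_diff_rdistrib mat_vec_t Lw)
    define A1 :: "real^'n^'n" where "A1 = (\<chi> k. if k = i then t *s v else row k A)"
    have c1: "(\<Sum>l\<in>UNIV. v$l *s row l A) = t *s v" by (simp only: rows_comb At Av)
    have "det A1 = v$i * det A"
      unfolding A1_def using cramer_lemma_transpose[of i v A] unfolding c1 .
    then have d1: "det A = det A1" using vi by simp
    have "(\<Sum>l\<in>UNIV. w$l *s row l A1) = (\<Sum>l\<in>UNIV. w$l *s row l A)"
      by (rule sum.cong) (auto simp: A1_def row_def wi vec_eq_iff)
    then have c2: "(\<Sum>l\<in>UNIV. w$l *s row l A1) = t *s w" by (simp only: rows_comb At Aw)
    define A2 :: "real^'n^'n" where "A2 = (\<chi> k. if k = j then t *s w else row k A1)"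
    have "det A2 = w$j * det A1"
      unfolding A2_def using cramer_lemma_transpose[of j w A1] unfolding c2 .
    then have d2: "det A = det A2" using wi d1 by simp
    have "A2 = (\<chi> k. if k = j then t *s w else (if k = i then t *s v else row k A))"
      unfolding A2_def A1_def by (simp add: vec_eq_iff row_def)
    then have "det A2 = t * det (\<chi> k. if k = j then w else (if k = i then t *s v else row k A))"
      using det_row_mul[of j t "\<lambda>_. w" "\<lambda>k. if k = i then t *s v else row k A"] by simp
    also have "(\<chi> k. if k = j then w else (if k = i then t *s v else row k A)) =
        (\<chi> k. if k = i then t *s v else (if k = j then w else row k A))"
      using ij by (simp add: vec_eq_iff)
    also have "det \<dots> = t * det (\<chi> k. if k = i then v else (if k = j then w else row k A))"
      using det_row_mul[of i t "\<lambda>_. v" "\<lambda>k. if k = j then w else row k A"] by simp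
    also have "(\<chi> k. if k = i then v else (if k = j then w else row k A)) =
        (\<chi> k l. poly (NP $ k $ l) t)"
      unfolding NP_def A_def using ij by (simp add: vec_eq_iff row_def mat_def)
    finally have "det A = t * (t * poly (det NP) t)" using d2 by (simp add: poly_det)
    then show ?thesis unfolding charpoly_eval A_def by (simp add: power2_eq_square)
  qed
  then have "poly (charpoly L) = poly ([:0,1:]^2 * det NP)" by (intro ext)
  then have "charpoly L = [:0,1:]^2 * det NP" by (simp only: poly_eq_poly_eq_iff)
  then have "[:- 0, 1:]^2 dvd charpoly L" by simp
  then have "2 \<le> order 0 (charpoly L)" using nz order_divides[of 0 2 "charpoly L"] by simp
  then show ?thesis using nz by (simp add: count_proots)
qed

lemma sym_inner:
  fixes L :: "real^'n^'n"
  assumes "transpose L = L" shows "a \<bullet> (L *v b) = (L *v a) \<bullet> b"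
proof -
  have Lij: "L$i$j = L$j$i" for i j using assms by (metis transpose_def vec_lambda_beta)
  have "a \<bullet> (L *v b) = (\<Sum>i\<in>UNIV. \<Sum>j\<in>UNIV. a$i * L$i$j * b$j)"
    by (simp add: inner_vec_def matrix_vector_mult_def sum_distrib_left mult.assoc)
  also have "\<dots> = (\<Sum>j\<in>UNIV. \<Sum>i\<in>UNIV. a$i * L$i$j * b$j)" by (rule sum.swap)
  also have "\<dots> = (\<Sum>j\<in>UNIV. (\<Sum>i\<in>UNIV. L$j$i * a$i) * b$j)"
    by (intro sum.cong refl) (simp add: sum_distrib_left sum_distrib_right Lij ac_simps)
  also have "\<dots> = (L *v a) \<bullet> b"
    by (simp add: inner_vec_def matrix_vector_mult_def)
  finally show ?thesis .
qed

lemma sum_Lv: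
  fixes L :: "real^'n^'n"
  assumes "transpose L = L" "L *v (\<chi> k. 1) = 0" shows "(\<Sum>i\<in>UNIV. (L *v v)$i) = 0"
proof -
  have "(\<Sum>i\<in>UNIV. (L *v v)$i) = (\<chi> k. 1) \<bullet> (L *v v)"
    by (simp add: inner_vec_def)
  also have "\<dots> = (L *v (\<chi> k. 1)) \<bullet> v" using sym_inner[OF assms(1)] by blast
  finally show ?thesis using assms(2) by simp
qed

lemma lam2_bound:
  fixes L :: "real^'n^'n"
  assumes lap: "graph_laplacian L" and n2: "CARD('n) \<ge> 2"
  shows "\<And>y::real^'n. (\<Sum>i\<in>UNIV. y$i) = 0 \<Longrightarrow> eig L 2 * (y \<bullet> y) \<le> y \<bullet> (L *v y)"
proof -
  have sym: "transpose L = L" and psd: "\<And>x. 0 \<le> x \<bullet> (L *v x)" and L1: "L *v (\<chi> i. 1) = 0"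
    using lap unfolding graph_laplacian_def by auto
  define Q where "Q = (\<lambda>x::real^'n. x \<bullet> (L *v x))"
  define U where "U = {x::real^'n. norm x = 1 \<and> (\<Sum>i\<in>UNIV. x$i) = 0}"
  have cU: "compact U"
  unfolding compact_eq_bounded_closed
  proof
    show "bounded U" unfolding U_def bounded_iff by auto
    show "closed U" unfolding U_def
      by (intro closed_Collect_conj closed_Collect_eq continuous_intros)
  qed
  obtain a b :: 'n where ab: "a \<noteq> b" using n2 by (meson card_2_iff' ex_card)
  define y0 :: "real^'n" where "y0 = (\<chi> k. (if k = a then 1 else 0) - (if k = b then 1 else 0))"
  have y0nz: "y0 \<noteq> 0" using ab unfolding y0_def by (auto simp: vec_eq_iff)
  have y0s: "(\<Sum>i\<in>UNIV. y0$i) = 0" unfolding y0_def by (simp add: sum_subtractf)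
  have "(1 / norm y0) *\<^sub>R y0 \<in> U" unfolding U_def using y0nz y0s
    by (simp add: sum_divide_distrib[symmetric])
  then have neU: "U \<noteq> {}" by auto
  have cQ: "continuous_on U Q" unfolding Q_def by (intro continuous_intros)
  obtain x0 where x0U: "x0 \<in> U" and x0min: "\<And>y. y \<in> U \<Longrightarrow> Q x0 \<le> Q y"
    using continuous_attains_inf[OF cU neU cQ] by blast
  define mu where "mu = Q x0"
  have x0n: "norm x0 = 1" and x0s: "(\<Sum>i\<in>UNIV. x0$i) = 0" using x0U unfolding U_def by auto
  have x0x0: "x0 \<bullet> x0 = 1" using x0n by (simp add: dot_square_norm)
  have claim1: "mu * (y \<bullet> y) \<le> Q y" if ys: "(\<Sum>i\<in>UNIV. y$i) = 0" for y
  proof (cases "y = 0")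
    case True then show ?thesis by (simp add: Q_def)
  next
    case False
    define u where "u = (1 / norm y) *\<^sub>R y"
    have "u \<in> U" unfolding U_def u_def using False ys by (simp add: sum_divide_distrib[symmetric])
    then have "mu \<le> Q u" using x0min mu_def by simp
    also have "Q u = Q y / (norm y)^2" unfolding Q_def u_def
      by (simp add: matrix_vector_mult_scaleR power2_eq_square)
    finally have "mu * (norm y)^2 \<le> Q y" using False by (simp add: field_simps)
    then show ?thesis by (simp add: dot_square_norm)
  qed
  define r where "r = L *v x0 - mu *\<^sub>R x0"
  have rs: "(\<Sum>i\<in>UNIV. r$i) = 0" unfolding r_def
    using sum_Lv[OF sym L1, of x0] x0s by (simp add: sum_subtractf sum_distrib_left[symmetric])
  define C where "C = Q r - mu * (r \<bullet> r)"
  have quad: "0 \<le> 2 * t * (r \<bullet> r) + t^2 * C" for t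
  proof -
    have s: "(\<Sum>i\<in>UNIV. (x0 + t *\<^sub>R r)$i) = 0" using x0s rs
      by (simp add: sum.distrib sum_distrib_left[symmetric])
    have e1: "Q (x0 + t *\<^sub>R r) = mu + 2 * t * (r \<bullet> (L *v x0)) + t^2 * Q r"
      unfolding Q_def mu_def using sym_inner[OF sym, of x0 r]
      by (simp add: matrix_vector_right_distrib matrix_vector_mult_scaleR inner_add_left
          inner_add_right power2_eq_square inner_commute[of r "L *v x0"] algebra_simps)
    have e2: "(x0 + t *\<^sub>R r) \<bullet> (x0 + t *\<^sub>R r) = 1 + 2 * t * (x0 \<bullet> r) + t^2 * (r \<bullet> r)"
      using x0x0 by (simp add: inner_add_left inner_add_right power2_eq_square inner_commute[of r x0] algebra_simps)
    have e3: "r \<bullet> (L *v x0) = r \<bullet> r + mu * (x0 \<bullet> r)"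
      unfolding r_def by (simp add: inner_diff_left inner_diff_right inner_commute[of x0 "L *v x0"] algebra_simps)
    have h: "mu * (1 + 2 * t * (x0 \<bullet> r) + t^2 * (r \<bullet> r)) \<le> mu + 2 * t * (r \<bullet> r + mu * (x0 \<bullet> r)) + t^2 * Q r"
      using claim1[OF s] e1 e2 e3 by simp
    have "mu + 2 * t * (r \<bullet> r + mu * (x0 \<bullet> r)) + t^2 * Q r - mu * (1 + 2 * t * (x0 \<bullet> r) + t^2 * (r \<bullet> r))
       = 2 * t * (r \<bullet> r) + t^2 * C" unfolding C_def by (simp add: algebra_simps)
    then show ?thesis using h by linarith
  qed
  have r0: "r = 0"
  proof (rule ccontr)
    assume "r \<noteq> 0"
    then have rr: "r \<bullet> r > 0" by simp
    define e where "e = (r \<bullet> r) / (\<bar>C\<bar> + 1)"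
    have e0: "e > 0" unfolding e_def using rr by (simp add: add_pos_nonneg)
    have "0 \<le> 2 * (-e) * (r \<bullet> r) + (-e)^2 * C" using quad by blast
    then have "2 * e * (r \<bullet> r) \<le> e^2 * C" by simp
    then have "2 * (r \<bullet> r) \<le> e * C" using e0 by (simp add: power2_eq_square)
    also have "e * C \<le> e * \<bar>C\<bar>" using e0 by (simp add: mult_left_mono)
    also have "e * \<bar>C\<bar> < r \<bullet> r" unfolding e_def using rr
      by (simp add: field_simps)
    finally show False using rr by simp
  qed
  then have Lx0: "L *v x0 = mu *s x0" unfolding r_def by (simp add: scalar_mult_eq_scaleR)
  have x0nz: "x0 \<noteq> 0" using x0n by auto
  have nz: "charpoly L \<noteq> 0" using charpoly_nz psd by blast
  have mu_root: "mu \<in># proots (charpoly L)"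
    using eig_root[OF Lx0 x0nz] nz by (simp add: count_proots order_root)
  have one_nz: "((\<chi> i. 1) :: real^'n) \<noteq> 0" by (simp add: vec_eq_iff)
  have zero_root: "0 \<in># proots (charpoly L)"
    using eig_root[of L "\<chi> i. 1" 0] L1 one_nz nz by (simp add: count_proots order_root)
  have mu0: "mu \<ge> 0" unfolding mu_def Q_def using psd by blast
  define sl where "sl = sorted_list_of_multiset (proots (charpoly L))"
  have eigsl: "eig L 2 = sl ! 1" unfolding eig_def sl_def by simp
  have srt: "sorted sl" unfolding sl_def by simp
  have le: "eig L 2 \<le> mu"
  proof (cases "mu = 0")
    case False
    then show ?thesis using sorted_second_le_a[OF srt, of 0 mu] mu_root zero_root mu0 eigsl
      unfolding sl_def by simp
  next
    case True
    have "\<exists>i j. x0$i \<noteq> x0$j"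
    proof (rule ccontr)
      assume "\<not> ?thesis"
      then have "\<forall>i. x0$i = x0$a" by blast
      then have "(\<Sum>i\<in>UNIV. x0$i) = (\<Sum>i\<in>(UNIV::'n set). x0$a)"
        by (intro sum.cong) auto
      then have "(\<Sum>i\<in>UNIV. x0$i) = of_nat CARD('n) * x0$a" by simp
      then have "x0$a = 0" using x0s by simp
      then have "x0 = 0" using \<open>\<forall>i. x0$i = x0$a\<close> by (simp add: vec_eq_iff)
      then show False using x0nz by simp
    qed
    then obtain i j where "x0$i \<noteq> x0$j" by blast
    then have "count (proots (charpoly L)) 0 \<ge> 2"
      using double_zero_root[OF sym L1 _ _ nz, of x0 i j] Lx0 True by simp
    then have "count (mset sl) 0 \<ge> 2" unfolding sl_def by simp
    then show ?thesis using sorted_second_le_b[OF srt] eigsl True by simp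
  qed
  fix y :: "real^'n" assume "(\<Sum>i\<in>UNIV. y$i) = 0"
  then have "mu * (y \<bullet> y) \<le> Q y" by (rule claim1)
  moreover have "eig L 2 * (y \<bullet> y) \<le> mu * (y \<bullet> y)" using le by (simp add: mult_right_mono)
  ultimately show "eig L 2 * (y \<bullet> y) \<le> y \<bullet> (L *v y)" unfolding Q_def by simp
qed





lemma norm_sq_vec: "(norm (x::complex^'n))^2 = (\<Sum>i\<in>UNIV. (cmod (x$i))^2)"
  unfolding norm_vec_def L2_set_def by (simp add: sum_nonneg)

lemma CS1: "cmod (\<Sum>i\<in>UNIV. cnj (a$i) * b$i) \<le> norm (a::complex^'n) * norm (b::complex^'n)"
proof -
  have "cmod (\<Sum>i\<in>UNIV. cnj (a$i) * b$i) \<le> (\<Sum>i\<in>UNIV. cmod (cnj (a$i) * b$i))"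
    by (rule norm_sum)
  also have "\<dots> = (\<Sum>i\<in>UNIV. \<bar>cmod (a$i)\<bar> * \<bar>cmod (b$i)\<bar>)" by (simp add: norm_mult)
  also have "\<dots> \<le> L2_set (\<lambda>i. cmod (a$i)) UNIV * L2_set (\<lambda>i. cmod (b$i)) UNIV"
    by (rule L2_set_mult_ineq)
  finally show ?thesis by (simp add: norm_vec_def)
qed

lemma CS2: "cmod (\<Sum>i\<in>UNIV. a$i * b$i) \<le> norm (a::complex^'n) * norm (b::complex^'n)"
proof -
  have "cmod (\<Sum>i\<in>UNIV. a$i * b$i) \<le> (\<Sum>i\<in>UNIV. cmod (a$i * b$i))"
    by (rule norm_sum)
  also have "\<dots> = (\<Sum>i\<in>UNIV. \<bar>cmod (a$i)\<bar> * \<bar>cmod (b$i)\<bar>)" by (simp add: norm_mult)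
  also have "\<dots> \<le> L2_set (\<lambda>i. cmod (a$i)) UNIV * L2_set (\<lambda>i. cmod (b$i)) UNIV"
    by (rule L2_set_mult_ineq)
  finally show ?thesis by (simp add: norm_vec_def)
qed

lemma norm_const_vec: "norm ((\<chi> i. c) :: complex^'n) = cmod c * sqrt (real CARD('n))"
  unfolding norm_vec_def L2_set_def by (simp add: real_sqrt_mult)

lemma norm_bound_vec:
  assumes "\<And>i. cmod (d$i) \<le> M" shows "norm (d::complex^'n) \<le> sqrt (real CARD('n)) * M"
proof -
  have M0: "0 \<le> M" using assms[of undefined] norm_ge_zero order_trans by blast
  have "(\<Sum>i\<in>UNIV. (cmod (d$i))^2) \<le> (\<Sum>i\<in>(UNIV::'n set). M^2)"
    by (intro sum_mono power_mono assms) auto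
  then have "(norm d)^2 \<le> (sqrt (real CARD('n)) * M)^2"
    by (simp add: norm_sq_vec power_mult_distrib)
  then show ?thesis using M0 by (simp add: power2_le_iff_abs_le)
qed

lemma cqf_bound:
  fixes L :: "real^'n^'n" and z :: "complex^'n"
  assumes hb: "\<And>y::real^'n. (\<Sum>i\<in>UNIV. y$i) = 0 \<Longrightarrow> lam * (y \<bullet> y) \<le> y \<bullet> (L *v y)"
    and zs: "(\<Sum>i\<in>UNIV. z$i) = 0"
  shows "lam * (norm z)^2 \<le> cmod (\<Sum>i\<in>UNIV. cnj (z$i) * (\<Sum>j\<in>UNIV. complex_of_real (L$i$j) * z$j))"
proof -
  define a :: "real^'n" where "a = (\<chi> i. Re (z$i))"
  define b :: "real^'n" where "b = (\<chi> i. Im (z$i))"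
  have as: "(\<Sum>i\<in>UNIV. a$i) = 0" unfolding a_def using arg_cong[OF zs, of Re] by (simp add: Re_sum)
  have bs: "(\<Sum>i\<in>UNIV. b$i) = 0" unfolding b_def using arg_cong[OF zs, of Im] by (simp add: Im_sum)
  have n2: "(norm z)^2 = a \<bullet> a + b \<bullet> b"
    unfolding norm_sq_vec a_def b_def cmod_power2 by (simp add: inner_vec_def sum.distrib power2_eq_square)
  have re: "Re (\<Sum>i\<in>UNIV. cnj (z$i) * (\<Sum>j\<in>UNIV. complex_of_real (L$i$j) * z$j)) = a \<bullet> (L *v a) + b \<bullet> (L *v b)"
    unfolding a_def b_def
    by (simp add: Re_sum inner_vec_def matrix_vector_mult_def sum_distrib_left sum.distrib[symmetric] algebra_simps)
  have "lam * (norm z)^2 \<le> a \<bullet> (L *v a) + b \<bullet> (L *v b)"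
    unfolding n2 using hb[OF as] hb[OF bs] by (simp add: distrib_left)
  also have "\<dots> \<le> cmod (\<Sum>i\<in>UNIV. cnj (z$i) * (\<Sum>j\<in>UNIV. complex_of_real (L$i$j) * z$j))"
    unfolding re[symmetric] by (rule complex_Re_le_cmod)
  finally show ?thesis .
qed

lemma core:
  fixes L :: "real^'n^'n" and d z y :: "complex^'n" and phi c :: complex
  assumes rows: "\<And>i. (\<Sum>j\<in>UNIV. L$i$j) = 0" and cols: "\<And>j. (\<Sum>i\<in>UNIV. L$i$j) = 0"
    and hb: "\<And>y::real^'n. (\<Sum>i\<in>UNIV. y$i) = 0 \<Longrightarrow> lam * (y \<bullet> y) \<le> y \<bullet> (L *v y)"
    and cd: "c * (\<Sum>i\<in>UNIV. d$i) = of_nat CARD('n)"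
    and cM1: "cmod c \<le> M1" and dM2: "\<And>i. cmod (d$i) \<le> M2" and M1: "M1 > 0" and M2: "M2 > 0"
    and big: "cmod phi * lam > M2 + M1 * M2^2"
    and ydef: "y = (\<chi> i. d$i * z$i + phi * (\<Sum>j\<in>UNIV. complex_of_real (L$i$j) * z$j))"
  shows "norm (z - (c / of_nat CARD('n) * (\<Sum>i\<in>UNIV. y$i)) *s (\<chi> i. 1))
     \<le> (M1 * M2 + 1)^2 / (cmod phi * lam - M2 - M1 * M2^2) * norm y"
proof -
  define nn where "nn = real CARD('n)"
  have nn0: "nn > 0" unfolding nn_def by simp
  define sn where "sn = sqrt nn"
  have sn0: "sn > 0" unfolding sn_def using nn0 by simp
  have snsn: "sn * sn = nn" unfolding sn_def using nn0 by simp
  define one :: "complex^'n" where "one = (\<chi> i. 1)"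
  have none: "norm one = sn" unfolding one_def sn_def nn_def by (simp add: norm_const_vec)
  define al where "al = (\<Sum>i\<in>UNIV. z$i) / of_nat CARD('n)"
  define w :: "complex^'n" where "w = (\<chi> i. z$i - al)"
  have ws: "(\<Sum>i\<in>UNIV. w$i) = 0" unfolding w_def al_def by (simp add: sum_subtractf)
  define Lw where "Lw = (\<lambda>i. \<Sum>j\<in>UNIV. complex_of_real (L$i$j) * w$j)"
  have hLz: "(\<Sum>j\<in>UNIV. complex_of_real (L$i$j) * z$j) = Lw i" for i
  proof -
    have "(\<Sum>j\<in>UNIV. complex_of_real (L$i$j) * z$j) = (\<Sum>j\<in>UNIV. complex_of_real (L$i$j) * w$j + complex_of_real (L$i$j) * al)"
      unfolding w_def by (intro sum.cong) (auto simp: algebra_simps)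
    also have "\<dots> = Lw i + complex_of_real (\<Sum>j\<in>UNIV. L$i$j) * al"
      unfolding Lw_def by (simp add: sum.distrib sum_distrib_right)
    finally show ?thesis using rows[of i] by simp
  qed
  have hy: "y$i = al * d$i + d$i * w$i + phi * Lw i" for i
    unfolding ydef w_def using hLz[of i] by (simp add: algebra_simps)
  have hsumLw: "(\<Sum>i\<in>UNIV. Lw i) = 0"
  proof -
    have "(\<Sum>i\<in>UNIV. Lw i) = (\<Sum>j\<in>UNIV. \<Sum>i\<in>UNIV. complex_of_real (L$i$j) * w$j)"
      unfolding Lw_def by (rule sum.swap)
    also have "\<dots> = (\<Sum>j\<in>UNIV. complex_of_real (\<Sum>i\<in>UNIV. L$i$j) * w$j)"
      by (simp add: sum_distrib_right)
    finally show ?thesis using cols by simp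
  qed
  define G where "G = (\<Sum>i\<in>UNIV. d$i * w$i)"
  have hsy: "(\<Sum>i\<in>UNIV. y$i) = al * (\<Sum>i\<in>UNIV. d$i) + G"
    unfolding G_def hy using hsumLw by (simp add: sum.distrib sum_distrib_left[symmetric])
  have ncn: "of_nat CARD('n) \<noteq> (0::complex)" by simp
  have halpha: "al = c / of_nat CARD('n) * ((\<Sum>i\<in>UNIV. y$i) - G)"
    unfolding hsy using cd ncn by (simp add: field_simps)
  define be where "be = c / of_nat CARD('n) * G"
  have hres: "z - (c / of_nat CARD('n) * (\<Sum>i\<in>UNIV. y$i)) *s (\<chi> i. 1) = w - be *s one"
  proof -
    have "c / of_nat CARD('n) * (\<Sum>i\<in>UNIV. y$i) = al + be"
      unfolding be_def using halpha by (simp add: algebra_simps)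
    then show ?thesis unfolding one_def w_def by (simp add: vec_eq_iff algebra_simps)
  qed
  define W where "W = norm w"
  define Y where "Y = norm y"
  have W0: "W \<ge> 0" "Y \<ge> 0" unfolding W_def Y_def by auto
  have nd: "norm d \<le> sn * M2" unfolding sn_def nn_def by (rule norm_bound_vec) (rule dM2)
  have hG: "cmod G \<le> sn * M2 * W"
  proof -
    have "cmod G \<le> norm d * norm w" unfolding G_def by (rule CS2)
    also have "\<dots> \<le> sn * M2 * W" unfolding W_def using nd by (simp add: mult_right_mono)
    finally show ?thesis .
  qed
  have cmc: "cmod (c / of_nat CARD('n)) \<le> M1 / nn"
    unfolding nn_def using cM1 by (simp add: norm_divide divide_right_mono)
  have hbe: "cmod be * sn \<le> M1 * M2 * W"
  proof -
    have "cmod be \<le> M1 / nn * (sn * M2 * W)" unfolding be_def norm_mult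
      using cmc hG M1 nn0 by (intro mult_mono) auto
    then have "cmod be * sn \<le> M1 / nn * (sn * M2 * W) * sn" using sn0 by (intro mult_right_mono) auto
    also have "\<dots> = M1 * M2 * W * (sn * sn) / nn" by (simp add: field_simps)
    also have "\<dots> = M1 * M2 * W" using snsn nn0 by simp
    finally show ?thesis .
  qed
  have hR: "norm (w - be *s one) \<le> (1 + M1 * M2) * W"
  proof -
    have t: "norm (w - be *s one) \<le> norm w + norm (be *s one)" by (rule norm_triangle_ineq4)
    have eq: "be *s one = (\<chi> i. be)" unfolding one_def by (simp add: vec_eq_iff)
    have "norm (be *s one) = cmod be * sn" unfolding eq
      by (simp add: norm_const_vec sn_def nn_def)
    then show ?thesis using t hbe unfolding W_def by (simp add: algebra_simps)
  qed
  define P where "P = (\<Sum>i\<in>UNIV. cnj (w$i) * y$i)"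
  define E where "E = (\<Sum>i\<in>UNIV. cnj (w$i) * d$i)"
  define F where "F = (\<Sum>i\<in>UNIV. cnj (w$i) * (d$i * w$i))"
  define q where "q = (\<Sum>i\<in>UNIV. cnj (w$i) * Lw i)"
  have hP: "P = al * E + F + phi * q"
    unfolding P_def E_def F_def q_def hy
    by (simp add: sum.distrib sum_distrib_left algebra_simps)
  have hq: "lam * W^2 \<le> cmod q"
    unfolding q_def Lw_def W_def using cqf_bound[OF hb ws] .
  have hPb: "cmod P \<le> W * Y" unfolding P_def W_def Y_def by (rule CS1)
  have hE: "cmod E \<le> W * (sn * M2)"
  proof -
    have "cmod E \<le> norm w * norm d" unfolding E_def by (rule CS1)
    also have "\<dots> \<le> W * (sn * M2)" unfolding W_def using nd by (simp add: mult_left_mono)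
    finally show ?thesis .
  qed
  have hF: "cmod F \<le> M2 * W^2"
  proof -
    have "cmod F \<le> (\<Sum>i\<in>UNIV. cmod (cnj (w$i) * (d$i * w$i)))" unfolding F_def by (rule norm_sum)
    also have "\<dots> = (\<Sum>i\<in>UNIV. cmod (d$i) * (cmod (w$i))^2)"
      by (simp add: norm_mult power2_eq_square algebra_simps)
    also have "\<dots> \<le> (\<Sum>i\<in>UNIV. M2 * (cmod (w$i))^2)"
      by (intro sum_mono mult_right_mono dM2) auto
    also have "\<dots> = M2 * W^2" unfolding W_def norm_sq_vec by (simp add: sum_distrib_left)
    finally show ?thesis .
  qed
  have hsyb: "cmod (\<Sum>i\<in>UNIV. y$i) \<le> sn * Y"
  proof -
    have "cmod (\<Sum>i\<in>UNIV. one$i * y$i) \<le> norm one * norm y" by (rule CS2)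
    then show ?thesis unfolding one_def Y_def using none unfolding one_def by simp
  qed
  have hal: "cmod al \<le> M1 / nn * (sn * Y + sn * M2 * W)"
  proof -
    have "cmod ((\<Sum>i\<in>UNIV. y$i) - G) \<le> sn * Y + sn * M2 * W"
      using norm_triangle_ineq4[of "\<Sum>i\<in>UNIV. y$i" G] hsyb hG by linarith
    then show ?thesis unfolding halpha norm_mult using cmc M1 nn0
      by (intro mult_mono) auto
  qed
  have halE: "cmod al * cmod E \<le> M1 * M2 * W * Y + M1 * M2^2 * W^2"
  proof -
    have "cmod al * cmod E \<le> (M1 / nn * (sn * Y + sn * M2 * W)) * (W * (sn * M2))"
      using hal hE by (intro mult_mono) (auto intro: mult_nonneg_nonneg simp: W0 M1 M2 nn0 sn0 less_imp_le)
    also have "\<dots> = M1 * M2 * (Y + M2 * W) * W * ((sn * sn) / nn)" by (simp add: field_simps)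
    also have "\<dots> = M1 * M2 * (Y + M2 * W) * W" using snsn nn0 by simp
    also have "\<dots> = M1 * M2 * W * Y + M1 * M2^2 * W^2" by (simp add: algebra_simps power2_eq_square)
    finally show ?thesis .
  qed
  have hphiq: "cmod phi * cmod q \<le> W * Y + M1 * M2 * W * Y + M1 * M2^2 * W^2 + M2 * W^2"
  proof -
    have "phi * q = P - al * E - F" using hP by simp
    then have "cmod phi * cmod q = cmod (P - al * E - F)" by (simp add: norm_mult[symmetric])
    also have "\<dots> \<le> cmod P + cmod (al * E) + cmod F"
    proof -
      have "cmod (P - al * E - F) \<le> cmod (P - al * E) + cmod F" by (rule norm_triangle_ineq4)
      moreover have "cmod (P - al * E) \<le> cmod P + cmod (al * E)" by (rule norm_triangle_ineq4)
      ultimately show ?thesis by linarith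
    qed
    finally show ?thesis using hPb halE hF by (simp add: norm_mult)
  qed
  have lW: "cmod phi * lam * W^2 \<le> cmod phi * cmod q"
    using hq by (simp add: mult_left_mono mult.assoc)
  define den where "den = cmod phi * lam - M2 - M1 * M2^2"
  have den0: "den > 0" unfolding den_def using big by simp
  have "den * W^2 \<le> (1 + M1 * M2) * W * Y"
    using lW hphiq unfolding den_def by (simp add: algebra_simps)
  then have hW: "den * W \<le> (1 + M1 * M2) * Y"
  proof (cases "W = 0")
    case True then show ?thesis using W0 M1 M2 by simp
  next
    case False
    then have Wp: "W > 0" using W0 by simp
    assume "den * W^2 \<le> (1 + M1 * M2) * W * Y"
    then have "(den * W) * W \<le> ((1 + M1 * M2) * Y) * W" by (simp add: power2_eq_square algebra_simps)
    then show ?thesis using Wp by simp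
  qed
  have "norm (w - be *s one) \<le> (1 + M1 * M2) * W" by (rule hR)
  also have "\<dots> \<le> (1 + M1 * M2) * ((1 + M1 * M2) * Y / den)"
    using hW den0 M1 M2 by (intro mult_left_mono) (auto simp: field_simps)
  also have "\<dots> = (M1 * M2 + 1)^2 / den * Y" by (simp add: power2_eq_square algebra_simps)
  finally show ?thesis unfolding hres den_def Y_def .
qed



theorem lemma1:
  fixes g :: "'n::finite \<Rightarrow> tf" and f :: tf and L :: "real^'n^'n"
    and s0 :: complex and M1 M2 :: real
  defines "gbar \<equiv> inverse ((\<Sum>i\<in>UNIV. inverse (g i)) / of_nat CARD('n))"
  defines "A \<equiv> (\<chi> i j. (if i = j then tf_eval (inverse (g i)) s0 else 0)
                     + tf_eval f s0 * complex_of_real (L $ i $ j)) :: complex^'n^'n"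
  defines "T \<equiv> matrix_inv A"
  assumes n2: "CARD('n) \<ge> 2"
    and proper_g: "\<And>i. proper_tf (g i)" and proper_f: "proper_tf f"
    and lap: "graph_laplacian L"
    and g_nz: "\<And>i. g i \<noteq> 0"
    and avg_nz: "(\<Sum>i\<in>UNIV. inverse (g i)) \<noteq> 0"
    and f_np: "\<not> is_pole f s0"
    and ginv_np: "\<And>i. \<not> is_pole (inverse (g i)) s0"
    and gbar_np: "\<not> is_pole gbar s0"
    and M1: "M1 > 0" and M2: "M2 > 0"
    and bM1: "cmod (tf_eval gbar s0) \<le> M1"
    and bM2: "\<And>i. cmod (tf_eval (inverse (g i)) s0) \<le> M2"
    and big: "cmod (tf_eval f s0) * eig L 2 > M2 + M1 * M2\<^sup>2"
  shows "invertible A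
    \<and> onorm (\<lambda>x. (T - (\<chi> i j. tf_eval gbar s0 / of_nat CARD('n))) *v x)
        \<le> (M1 * M2 + 1)\<^sup>2 / (cmod (tf_eval f s0) * eig L 2 - M2 - M1 * M2\<^sup>2)"
proof -
  have sym: "transpose L = L" and L1: "L *v (\<chi> i. 1) = 0"
    using lap unfolding graph_laplacian_def by auto
  have Lij: "L$i$j = L$j$i" for i j using sym by (metis transpose_def vec_lambda_beta)
  have rows: "(\<Sum>j\<in>UNIV. L$i$j) = 0" for i
    using arg_cong[OF L1, of "\<lambda>v. v$i"] by (simp add: matrix_vector_mult_def)
  have cols: "(\<Sum>i\<in>UNIV. L$i$j) = 0" for j
    using rows[of j] by (simp add: Lij)
  have hb: "\<And>y::real^'n. (\<Sum>i\<in>UNIV. y$i) = 0 \<Longrightarrow> eig L 2 * (y \<bullet> y) \<le> y \<bullet> (L *v y)"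
    using lam2_bound[OF lap n2] by blast
  define d :: "complex^'n" where "d = (\<chi> i. tf_eval (inverse (g i)) s0)"
  define c where "c = tf_eval gbar s0"
  define phi where "phi = tf_eval f s0"
  have evh: "ev_ok (\<Sum>i\<in>UNIV. inverse (g i)) s0 (\<Sum>i\<in>UNIV. d$i)"
    unfolding d_def using ev_ok_I[OF ginv_np] by (simp add: ev_ok_sum)
  have cd: "c * (\<Sum>i\<in>UNIV. d$i) = of_nat CARD('n)"
    unfolding c_def using gbar_rel[OF evh avg_nz _ gbar_def[THEN meta_eq_to_obj_eq] gbar_np] by simp
  have dM2: "cmod (d$i) \<le> M2" for i unfolding d_def using bM2 by simp
  have Az: "A *v z = (\<chi> i. d$i * z$i + phi * (\<Sum>j\<in>UNIV. complex_of_real (L$i$j) * z$j))" for z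
    unfolding A_def d_def phi_def
    by (simp add: vec_eq_iff matrix_vector_mult_def distrib_right sum.distrib
        if_distrib[of "\<lambda>u. u * _"] sum_distrib_left mult.assoc cong: if_cong)
  define K where "K = (M1 * M2 + 1)\<^sup>2 / (cmod (tf_eval f s0) * eig L 2 - M2 - M1 * M2\<^sup>2)"
  have main: "norm (z - (c / of_nat CARD('n) * (\<Sum>i\<in>UNIV. (A *v z)$i)) *s (\<chi> i. 1)) \<le> K * norm (A *v z)" for z
    unfolding K_def phi_def[symmetric]
    by (rule core[OF rows cols hb cd _ dM2 M1 M2 _ Az]) (use bM1 big in \<open>auto simp: c_def phi_def\<close>)
  have inj: "inj ((*v) A)"
    unfolding vec.inj_iff_eq_0
  proof (intro allI impI)
    fix z assume "A *v z = 0"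
    then have "norm z \<le> 0" using main[of z] by simp
    then show "z = 0" by simp
  qed
  have inv: "invertible A" using inj invertible_left_inverse matrix_left_invertible_injective by blast
  have AT: "A ** T = mat 1"
  proof -
    have "\<exists>A'. A ** A' = mat 1 \<and> A' ** A = mat 1" using inv unfolding invertible_def .
    then have "A ** matrix_inv A = mat 1 \<and> matrix_inv A ** A = mat 1"
      unfolding matrix_inv_def by (rule someI_ex)
    then show ?thesis unfolding T_def by blast
  qed
  have "onorm (\<lambda>x. (T - (\<chi> i j. tf_eval gbar s0 / of_nat CARD('n))) *v x) \<le> K"
  proof (rule onorm_le)
    fix y :: "complex^'n"
    define z where "z = T *v y"
    have Azy: "A *v z = y" unfolding z_def using AT by (simp add: matrix_vector_mul_assoc)
    have "(T - (\<chi> i j. tf_eval gbar s0 / of_nat CARD('n))) *v y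
        = z - (c / of_nat CARD('n) * (\<Sum>i\<in>UNIV. y$i)) *s (\<chi> i. 1)"
      unfolding z_def c_def
      by (simp add: matrix_vector_mult_diff_rdistrib vec_eq_iff matrix_vector_mult_def sum_distrib_left
          left_diff_distrib sum_subtractf)
    then show "norm ((T - (\<chi> i j. tf_eval gbar s0 / of_nat CARD('n))) *v y) \<le> K * norm y"
      using main[of z] Azy by simp
  qed
  then show ?thesis using inv unfolding K_def by simp
qed

end
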